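(* Fix an integer $\ell\ge1$ and let $n$ be a multiple of $\ell$. The expected runtime $T$ of the (1+1) EA on $\mathrm{BLO}_\ell$ with static mutation rate $p\in(0,1)$ satisfies, as $p\to0^+$, \[ \mathbb{E}[T]=2^\ell\left(\frac bp+a+O(p)\right)\frac{(1-p)^{-n+\ell}-(1-p)^{\ell}}{1-(1-p)^{\ell}}, \] where the constant in $O(p)$ depends only on $\ell$.
   Context: $s(\ell)=\sum_{j=1}^\ell\binom{\ell}{j}\frac1j$, $a=\frac12-\frac{1+s(\ell)}{2^{\ell+1}}$, $b=\frac{s(\ell)}{2^{\ell+1}}$. For $x\in\{0,1\}^n$, $\mathrm{BLO}_\ell(x)=\sum_{m=1}^{n/\ell}\prod_{i=1}^{m\ell}x_i$. The (1+1) EA with static mutation rate $p$: $x_0$ uniform on $\{0,1\}^n$; each iteration creates $y$ from the current $x$ by flipping each bit independently with probability $p$, and $y$ replaces $x$ iff $\mathrm{BLO}_\ell(y)\ge\mathrm{BLO}_\ell(x)$; $T$ is the number of iterations until the current individual first has fitness $n/\ell$ (zero if $x_0$ already does). *)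

theory Defs
  imports "HOL-Probability.Probability" "HOL-Probability.SPMF"
begin

definition s_const :: "nat \<Rightarrow> real" where
  "s_const l = (\<Sum>j=1..l. real (l choose j) / real j)"

definition a_const :: "nat \<Rightarrow> real" where
  "a_const l = 1/2 - (1 + s_const l) / 2 ^ (l + 1)"

definition b_const :: "nat \<Rightarrow> real" where
  "b_const l = s_const l / 2 ^ (l + 1)"

text \<open>Bit strings are boolean lists; position i of the list is bit x_(i+1) of the paper.\<close>
definition blo :: "nat \<Rightarrow> bool list \<Rightarrow> nat" where
  "blo l xs = (\<Sum>m\<in>{1..length xs div l}. if (\<forall>i<m * l. xs ! i) then 1 else 0)"

fun mutate :: "real \<Rightarrow> bool list \<Rightarrow> bool list pmf" where
  "mutate p [] = return_pmf []"
| "mutate p (x # xs) = bind_pmf (bernoulli_pmf p)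
      (\<lambda>b. map_pmf (\<lambda>ys. (if b then \<not> x else x) # ys) (mutate p xs))"

definition ea_step :: "real \<Rightarrow> nat \<Rightarrow> bool list \<Rightarrow> bool list pmf" where
  "ea_step p l x = map_pmf (\<lambda>y. if blo l y \<ge> blo l x then y else x) (mutate p x)"

definition ea_init :: "nat \<Rightarrow> bool list pmf" where
  "ea_init n = pmf_of_set {xs. length xs = n}"

definition kill_opt :: "nat \<Rightarrow> nat \<Rightarrow> bool list \<Rightarrow> bool list spmf" where
  "kill_opt l n x = (if blo l x = n div l then return_pmf None else return_spmf x)"

text \<open>alive p l n t is the sub-distribution of x_t restricted to the event that
  none of x_0, ..., x_t is optimal, i.e. the event T > t.\<close>
fun ea_alive :: "real \<Rightarrow> nat \<Rightarrow> nat \<Rightarrow> nat \<Rightarrow> bool list spmf" where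
  "ea_alive p l n 0 = bind_pmf (ea_init n) (kill_opt l n)"
| "ea_alive p l n (Suc t) =
     bind_spmf (ea_alive p l n t) (\<lambda>x. bind_pmf (ea_step p l x) (kill_opt l n))"

text \<open>E[T] = sum over t of Pr[T > t] (in ennreal, so it may be infinite).\<close>
definition expected_runtime :: "real \<Rightarrow> nat \<Rightarrow> nat \<Rightarrow> ennreal" where
  "expected_runtime p l n = (\<Sum>t. ennreal (weight_spmf (ea_alive p l n t)))"

end

theory Submission
  imports Defs
begin


definition U :: "nat \<Rightarrow> bool list pmf" where "U m = pmf_of_set {xs. length xs = m}"

lemma card_len: "card {xs::bool list. length xs = m} = 2 ^ m"
  using card_lists_length_eq[of "UNIV::bool set" m] by simp

lemma fin_len: "finite {xs::bool list. length xs = m}"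
  using finite_lists_length_eq[of "UNIV::bool set" m] by simp

lemma ne_len: "{xs::bool list. length xs = m} \<noteq> {}"
  by (metis (mono_tags) empty_iff length_replicate mem_Collect_eq)

lemma pmf_U: "pmf (U m) xs = (if length xs = m then 1 / 2 ^ m else 0)"
  unfolding U_def using fin_len ne_len by (simp add: card_len)

lemma set_U: "set_pmf (U m) = {xs. length xs = m}"
  unfolding U_def using fin_len ne_len by simp

lemma U_Suc: "U (Suc m) = bind_pmf (bernoulli_pmf (1/2)) (\<lambda>b. map_pmf (Cons b) (U m))"
proof (rule pmf_eqI)
  fix y :: "bool list"
  have inj: "inj (Cons b)" for b :: bool by (simp add: inj_def)
  show "pmf (U (Suc m)) y = pmf (bind_pmf (bernoulli_pmf (1/2)) (\<lambda>b. map_pmf (Cons b) (U m))) y"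
  proof (cases y)
    case Nil
    have "pmf (map_pmf (Cons b) (U m)) [] = 0" for b by (auto simp: pmf_eq_0_set_pmf)
    then show ?thesis using Nil by (simp add: pmf_U pmf_bind integral_bernoulli_pmf)
  next
    case (Cons c ys)
    have "pmf (map_pmf (Cons b) (U m)) (c # ys) = (if b = c then pmf (U m) ys else 0)" for b
    proof (cases "b = c")
      case True then show ?thesis using pmf_map_inj'[OF inj] by simp
    next
      case False then show ?thesis by (auto simp: pmf_eq_0_set_pmf)
    qed
    then show ?thesis using Cons by (simp add: pmf_U pmf_bind integral_bernoulli_pmf)
  qed
qed

lemma app_fun1[simp]: "(@) [] = (\<lambda>y. y)" by auto
lemma app_fun2[simp]: "(@) (a # xs) = (\<lambda>y. a # xs @ y)" by auto

lemma U_append: "U (a + b) = bind_pmf (U a) (\<lambda>x. map_pmf (\<lambda>y. x @ y) (U b))"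
proof (induction a)
  case 0
  have "U 0 = return_pmf []" unfolding U_def by (simp add: pmf_of_set_singleton)
  then show ?case by (simp add: bind_return_pmf map_pmf_ident)
next
  case (Suc a)
  show ?case
    by (simp add: U_Suc Suc.IH map_bind_pmf bind_map_pmf bind_assoc_pmf map_pmf_comp)
qed

lemma mutate_append: "mutate p (xs @ ys) = bind_pmf (mutate p xs) (\<lambda>a. map_pmf (\<lambda>b. a @ b) (mutate p ys))"
  by (induction xs) (simp_all add: bind_return_pmf map_pmf_ident map_bind_pmf bind_map_pmf bind_assoc_pmf map_pmf_comp)

lemma set_mutate: "set_pmf (mutate p xs) \<subseteq> {ys. length ys = length xs}"
  by (induction xs) auto

lemma flip_half: "map_pmf (\<lambda>b. if f then \<not> b else b) (bernoulli_pmf (1/2)) = bernoulli_pmf (1/2)"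
proof -
  have "bij_betw (\<lambda>b. if f then \<not> b else b) UNIV UNIV"
    by (rule bij_betwI[where g="\<lambda>b. if f then \<not> b else b"]) auto
  then show ?thesis unfolding bernoulli_pmf_half_conv_pmf_of_set
    by (intro map_pmf_of_set_bij_betw) auto
qed

lemma U_mutate: "bind_pmf (U m) (mutate p) = U m"
proof (induction m)
  case 0
  have "U 0 = return_pmf []" unfolding U_def by (simp add: pmf_of_set_singleton)
  then show ?case by (simp add: bind_return_pmf)
next
  case (Suc m)
  have "bind_pmf (U (Suc m)) (mutate p) =
     bind_pmf (bernoulli_pmf (1/2)) (\<lambda>b. bind_pmf (bernoulli_pmf p) (\<lambda>f.
        map_pmf (Cons (if f then \<not> b else b)) (bind_pmf (U m) (mutate p))))"
    by (simp add: U_Suc bind_map_pmf bind_assoc_pmf map_bind_pmf)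
       (subst bind_commute_pmf, simp)
  also have "\<dots> = bind_pmf (bernoulli_pmf p) (\<lambda>f. bind_pmf (bernoulli_pmf (1/2)) (\<lambda>b.
        map_pmf (Cons (if f then \<not> b else b)) (U m)))"
    by (subst bind_commute_pmf) (simp add: Suc.IH)
  also have "\<dots> = bind_pmf (bernoulli_pmf p) (\<lambda>f. bind_pmf (map_pmf (\<lambda>b. if f then \<not> b else b) (bernoulli_pmf (1/2))) (\<lambda>b.
        map_pmf (Cons b) (U m)))"
    by (simp add: bind_map_pmf)
  also have "\<dots> = U (Suc m)"
    by (simp add: flip_half U_Suc[symmetric] bind_pmf_const)
  finally show ?case .
qed

lemma pmf_mutate_self: "0 \<le> p \<Longrightarrow> p \<le> 1 \<Longrightarrow> pmf (mutate p xs) xs = (1 - p) ^ length xs"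
proof (induction xs)
  case Nil then show ?case by simp
next
  case (Cons x xs)
  have inj: "inj (Cons b)" for b :: bool by (simp add: inj_def)
  have "pmf (map_pmf (\<lambda>ys. (if b then \<not> x else x) # ys) (mutate p xs)) (x # xs) = (if b then 0 else pmf (mutate p xs) xs)" for b
  proof (cases b)
    case True then show ?thesis by (auto simp: pmf_eq_0_set_pmf)
  next
    case False then show ?thesis using pmf_map_inj'[OF inj] by simp
  qed
  then show ?case using Cons by (simp add: pmf_bind integral_bernoulli_pmf)
qed

abbreviation E :: "'a pmf \<Rightarrow> ('a \<Rightarrow> real) \<Rightarrow> real" where
  "E M f \<equiv> measure_pmf.expectation M f"

lemma E_bind:
  assumes "finite (set_pmf M)" "\<And>x. x \<in> set_pmf M \<Longrightarrow> finite (set_pmf (f x))"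
  shows "E (bind_pmf M f) g = E M (\<lambda>x. E (f x) g)"
  using assms
  by (subst pmf_expectation_bind[of "set_pmf M"])
     (auto simp: integral_measure_pmf[of "set_pmf M"] mult.commute)

lemma fin_mutate[simp]: "finite (set_pmf (mutate p xs))"
  by (rule finite_subset[OF set_mutate]) (metis fin_len)

lemma fin_U[simp]: "finite (set_pmf (U m))"
  by (simp add: set_U fin_len)

lemma fin_bern[simp]: "finite (set_pmf (bernoulli_pmf p))"
  by (rule finite_subset[of _ UNIV]) auto

lemma int_fin[simp]: "finite (set_pmf M) \<Longrightarrow> integrable (measure_pmf M) (f :: _ \<Rightarrow> real)"
  by (rule integrable_measure_pmf_finite)

fun esym :: "nat \<Rightarrow> bool list \<Rightarrow> real" where
  "esym 0 c = 1"
| "esym (Suc m) [] = 0"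
| "esym (Suc m) (b # c) = esym (Suc m) c + (if b then 1 else -1) * esym m c"

lemma E_mutate_Cons:
  "E (mutate p (x # xs)) h =
     E (bernoulli_pmf p) (\<lambda>f. E (mutate p xs) (\<lambda>ys. h ((if f then \<not> x else x) # ys)))"
  by (simp add: E_bind)

lemma E_esym_mutate:
  assumes "0 \<le> p" "p \<le> 1"
  shows "E (mutate p c) (esym m) = (1 - 2 * p) ^ m * esym m c"
proof (induction c arbitrary: m)
  case Nil then show ?case by (cases m) simp_all
next
  case (Cons x c)
  show ?case
  proof (cases m)
    case 0 then show ?thesis by simp
  next
    case (Suc j)
    have e: "E (mutate p c) (\<lambda>ys. esym (Suc j) ys + s * esym j ys)
          = E (mutate p c) (esym (Suc j)) + s * E (mutate p c) (esym j)" for s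
      by simp
    have "E (mutate p (x#c)) (esym (Suc j)) = E (bernoulli_pmf p) (\<lambda>f.
       E (mutate p c) (esym (Suc j)) + (if (if f then \<not> x else x) then 1 else -1) * E (mutate p c) (esym j))"
      by (subst E_mutate_Cons) (simp only: esym.simps e)
    then show ?thesis using assms
      by (cases x) (simp_all del: mutate.simps add: Suc Cons.IH integral_bernoulli_pmf algebra_simps)
  qed
qed

lemma esym_gt: "length c < m \<Longrightarrow> esym m c = 0"
proof (induction c arbitrary: m)
  case Nil then show ?case by (cases m) auto
next
  case (Cons b c) then show ?case by (cases m) auto
qed

lemma esym_sum: "(\<Sum>m\<le>length c. esym m c) = (if (\<forall>b\<in>set c. b) then 2 ^ length c else 0)"
proof (induction c)
  case Nil then show ?case by simp
next
  case (Cons b c)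
  have "(\<Sum>m\<le>length (b # c). esym m (b # c)) = 1 + (\<Sum>m\<le>length c. esym (Suc m) (b # c))"
    by (simp only: length_Cons sum.atMost_Suc_shift) simp
  also have "\<dots> = 1 + (\<Sum>m\<le>length c. esym (Suc m) c) + (if b then 1 else -1) * (\<Sum>m\<le>length c. esym m c)"
    by (simp add: sum.distrib sum_distrib_left)
  also have "1 + (\<Sum>m\<le>length c. esym (Suc m) c) = (\<Sum>m\<le>length c. esym m c)"
  proof -
    have "(\<Sum>m\<le>Suc (length c). esym m c) = 1 + (\<Sum>m\<le>length c. esym (Suc m) c)"
      by (simp only: sum.atMost_Suc_shift) simp
    moreover have "(\<Sum>m\<le>Suc (length c). esym m c) = (\<Sum>m\<le>length c. esym m c)"
      by (simp add: esym_gt)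
    ultimately show ?thesis by simp
  qed
  finally show ?case using Cons by auto
qed

lemma esym_rep: "esym m (replicate L True) = real (L choose m)"
proof (induction L arbitrary: m)
  case 0 then show ?case by (cases m) auto
next
  case (Suc L) then show ?case by (cases m) auto
qed

lemma esym_abs: "\<bar>esym m c\<bar> \<le> real (length c choose m)"
proof (induction c arbitrary: m)
  case Nil then show ?case by (cases m) auto
next
  case (Cons b c)
  show ?case
  proof (cases m)
    case 0 then show ?thesis by simp
  next
    case (Suc j)
    have "\<bar>esym (Suc j) (b # c)\<bar> \<le> \<bar>esym (Suc j) c\<bar> + \<bar>esym j c\<bar>"
      by (auto simp: abs_if)
    also have "\<dots> \<le> real (length c choose Suc j) + real (length c choose j)"
      using Cons.IH[of "Suc j"] Cons.IH[of j] by linarith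
    finally show ?thesis by (simp add: Suc)
  qed
qed

lemma E_U_esym: "0 < m \<Longrightarrow> E (U L) (esym m) = 0"
proof (induction L arbitrary: m)
  case 0
  have "U 0 = return_pmf []" unfolding U_def by (simp add: pmf_of_set_singleton)
  then show ?case using 0 by (cases m) auto
next
  case (Suc L)
  then obtain j where j: "m = Suc j" by (cases m) auto
  have "E (U (Suc L)) (esym m) = E (bernoulli_pmf (1/2)) (\<lambda>b.
       E (U L) (esym (Suc j)) + (if b then 1 else -1) * E (U L) (esym j))"
    by (simp add: U_Suc E_bind j)
  then show ?case using Suc.IH[of "Suc j"] by (simp add: integral_bernoulli_pmf)
qed

definition h :: "real \<Rightarrow> nat \<Rightarrow> bool list \<Rightarrow> real" where
  "h p l c = (\<Sum>m=1..l. (real (l choose m) - esym m c) / (1 - (1 - 2 * p) ^ m))"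

definition A :: "real \<Rightarrow> nat \<Rightarrow> real" where
  "A p l = (\<Sum>m=1..l. real (l choose m) / (1 - (1 - 2 * p) ^ m))"

lemma lam_pos: "0 < (p::real) \<Longrightarrow> p < 1 \<Longrightarrow> 0 < m \<Longrightarrow> 0 < 1 - (1 - 2 * p) ^ m"
proof -
  assume a: "0 < p" "p < 1" "0 < m"
  have "\<bar>1 - 2 * p\<bar> < 1" using a by auto
  then have "\<bar>1 - 2 * p\<bar> ^ m < 1" using a by (simp add: power_less_one_iff)
  then have "(1 - 2 * p) ^ m < 1" by (metis abs_ge_self le_less_trans power_abs)
  then show ?thesis by simp
qed

lemma h_rep: "h p l (replicate l True) = 0"
  unfolding h_def by (simp add: esym_rep)

lemma h_nonneg: "0 < (p::real) \<Longrightarrow> p < 1 \<Longrightarrow> length c = l \<Longrightarrow> 0 \<le> h p l c"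
  unfolding h_def
  by (intro sum_nonneg divide_nonneg_pos) (use esym_abs[of _ c] lam_pos in \<open>auto simp: abs_le_iff\<close>)

lemma E_U_h: "E (U l) (h p l) = A p l"
  unfolding h_def A_def
  by (simp add: integral_sum[where I="{1..l}"] E_U_esym diff_divide_distrib)

lemma E_mutate_h:
  assumes "0 < p" "p < 1" "length c = l" "\<not> (\<forall>b\<in>set c. b)"
  shows "E (mutate p c) (h p l) = h p l c - 1"
proof -
  have "E (mutate p c) (h p l) = (\<Sum>m=1..l. (real (l choose m) - (1 - 2 * p) ^ m * esym m c) / (1 - (1 - 2 * p) ^ m))"
    unfolding h_def using assms
    by (simp add: integral_sum[where I="{1..l}"] E_esym_mutate diff_divide_distrib)
  also have "\<dots> = h p l c + (\<Sum>m=1..l. esym m c)"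
    unfolding h_def sum.distrib[symmetric]
  proof (rule sum.cong[OF refl])
    fix m assume "m \<in> {1..l}"
    then have "0 < 1 - (1 - 2 * p) ^ m" using lam_pos assms by auto
    then show "(real (l choose m) - (1 - 2 * p) ^ m * esym m c) / (1 - (1 - 2 * p) ^ m) =
      (real (l choose m) - esym m c) / (1 - (1 - 2 * p) ^ m) + esym m c"
      by (simp add: field_simps)
  qed
  also have "(\<Sum>m=1..l. esym m c) = -1"
  proof -
    have "(\<Sum>m\<le>l. esym m c) = 0" using esym_sum[of c] assms by auto
    moreover have "{..l} = insert 0 {1..l}" by auto
    ultimately show ?thesis by simp
  qed
  finally show ?thesis by simp
qed

function levr :: "nat \<Rightarrow> bool list \<Rightarrow> nat" where
  "levr l xs = (if l = 0 \<or> length xs < l then 0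
     else if (\<forall>b\<in>set (take l xs). b) then Suc (levr l (drop l xs)) else 0)"
  by pat_completeness auto
termination by (relation "Wellfounded.measure (\<lambda>(l, xs). length xs)") auto

declare levr.simps[simp del]

lemma blo_levr:
  assumes "1 \<le> l"
  shows "blo l xs = levr l xs"
proof (induction "length xs" arbitrary: xs rule: less_induct)
  case less
  show ?case
  proof (cases "length xs < l")
    case True
    then show ?thesis using assms by (simp add: blo_def levr.simps)
  next
    case False
    define ys where "ys = drop l xs"
    define N where "N = length ys div l"
    have lys: "length ys < length xs" using False assms by (simp add: ys_def)
    have dN: "length xs div l = Suc N"
      using False assms unfolding N_def ys_def
      by (simp add: le_div_geq)
    define f where "f m = (if (\<forall>i<m * l. xs ! i) then 1 else (0::nat))" for m
    have "blo l xs = sum f {1..Suc N}" unfolding blo_def f_def dN ..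
    also have "\<dots> = f 1 + sum (f \<circ> Suc) {1..N}"
      by (subst sum.atLeast_Suc_atMost) (simp, subst sum.atLeast_Suc_atMost_Suc_shift, simp)
    finally have b: "blo l xs = f 1 + sum (f \<circ> Suc) {1..N}" .
    have nthys: "ys ! i = xs ! (l + i)" for i
      unfolding ys_def using False by (simp add: nth_drop)
    have tk: "(\<forall>b\<in>set (take l xs). b) \<longleftrightarrow> (\<forall>i<l. xs ! i)"
      using False by (auto simp: all_set_conv_all_nth)
    show ?thesis
    proof (cases "\<forall>i<l. xs ! i")
      case True
      have "f (Suc m) = (if (\<forall>i<m * l. ys ! i) then 1 else 0)" for m
      proof -
        have "(\<forall>i<Suc m * l. xs ! i) \<longleftrightarrow> (\<forall>i<m * l. ys ! i)"
        proof
          assume a: "\<forall>i<Suc m * l. xs ! i"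
          show "\<forall>i<m * l. ys ! i" using a by (simp add: nthys)
        next
          assume a: "\<forall>i<m * l. ys ! i"
          show "\<forall>i<Suc m * l. xs ! i"
          proof (intro allI impI)
            fix i assume "i < Suc m * l"
            show "xs ! i"
            proof (cases "i < l")
              case True then show ?thesis using \<open>\<forall>i<l. xs ! i\<close> by simp
            next
              case False
              then have "xs ! i = ys ! (i - l)" by (simp add: nthys)
              then show ?thesis using a \<open>i < Suc m * l\<close> False by auto
            qed
          qed
        qed
        then show ?thesis unfolding f_def by simp
      qed
      then have "sum (f \<circ> Suc) {1..N} = blo l ys" unfolding blo_def N_def by simp
      moreover have "f 1 = 1" unfolding f_def using True by simp
      ultimately have "blo l xs = Suc (blo l ys)" using b by simp
      then show ?thesis using less(1)[OF lys] False assms True tk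
        by (subst levr.simps) (simp add: ys_def)
    next
      case False
      then obtain j where j: "j < l" "\<not> xs ! j" by auto
      have "f m = 0" if "1 \<le> m" for m
      proof -
        have "j < m * l" using j that by (metis less_le_trans mult_1 mult_le_mono1)
        then show ?thesis unfolding f_def using j by auto
      qed
      then have "blo l xs = 0" using b by simp
      then show ?thesis using \<open>\<not> length xs < l\<close> False tk by (subst levr.simps) auto
    qed
  qed
qed

lemma levr_cons_block:
  assumes "1 \<le> l" "length c = l"
  shows "levr l (c @ ys) = (if (\<forall>b\<in>set c. b) then Suc (levr l ys) else 0)"
  using assms by (subst levr.simps) auto

lemma levr_rep:
  assumes "1 \<le> l"
  shows "levr l (replicate (i * l) True @ ys) = i + levr l ys"
proof (induction i)
  case 0 then show ?case by simp
next
  case (Suc i)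
  have "replicate (Suc i * l) True @ ys = replicate l True @ (replicate (i * l) True @ ys)"
    by (simp add: replicate_add)
  then show ?case using Suc assms by (simp add: levr_cons_block)
qed

lemma levr_lt:
  assumes "1 \<le> l" "length a = i * l" "a \<noteq> replicate (i * l) True"
  shows "levr l (a @ ys) < i"
  using assms(2,3)
proof (induction i arbitrary: a)
  case 0 then show ?case by simp
next
  case (Suc i)
  define a1 where "a1 = take l a"
  define a2 where "a2 = drop l a"
  have a: "a = a1 @ a2" by (simp add: a1_def a2_def)
  have l1: "length a1 = l" using Suc.prems by (simp add: a1_def)
  have l2: "length a2 = i * l" using Suc.prems by (simp add: a2_def)
  show ?case
  proof (cases "\<forall>b\<in>set a1. b")
    case True
    then have "a1 = replicate l True" using l1 by (simp add: list_eq_iff_nth_eq all_set_conv_all_nth)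
    then have "a2 \<noteq> replicate (i * l) True" using Suc.prems a by (auto simp: replicate_add)
    then have "levr l (a2 @ ys) < i" using Suc.IH l2 by simp
    then show ?thesis using True assms(1) l1 a by (simp add: levr_cons_block)
  next
    case False
    then show ?thesis using assms(1) l1 a by (auto simp: levr_cons_block)
  qed
qed

lemma levr_le: "1 \<le> l \<Longrightarrow> levr l xs \<le> length xs div l"
proof (induction "length xs" arbitrary: xs rule: less_induct)
  case less
  show ?case
  proof (cases "length xs < l")
    case True then show ?thesis by (subst levr.simps) simp
  next
    case False
    have "levr l (drop l xs) \<le> length (drop l xs) div l" using less(1)[of "drop l xs"] less(2) False by simp
    moreover have "length xs div l = Suc (length (drop l xs) div l)" using False less(2)
      by (simp add: le_div_geq)
    ultimately show ?thesis by (subst levr.simps) auto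
  qed
qed

lemma levr_decomp:
  assumes "1 \<le> l" "levr l xs = i" "(i + 1) * l \<le> length xs"
  shows "take (i * l) xs = replicate (i * l) True \<and> \<not> (\<forall>b\<in>set (take l (drop (i * l) xs)). b)"
  using assms(2,3)
proof (induction i arbitrary: xs)
  case 0
  then show ?case using assms(1) by (subst (asm) levr.simps) (auto split: if_splits)
next
  case (Suc i)
  have len: "l \<le> length xs" using Suc.prems by simp
  then have tk: "\<forall>b\<in>set (take l xs). b" and lv: "levr l (drop l xs) = i"
    using Suc.prems(1) assms(1) by (subst (asm) levr.simps, auto split: if_splits)+
  have "(i + 1) * l \<le> length (drop l xs)" using Suc.prems by simp
  from Suc.IH[OF lv this] have ih: "take (i * l) (drop l xs) = replicate (i * l) True"
     "\<not> (\<forall>b\<in>set (take l (drop (i * l) (drop l xs))). b)" by auto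
  have "take l xs = replicate l True" using tk len by (simp add: list_eq_iff_nth_eq all_set_conv_all_nth)
  then have "take (Suc i * l) xs = replicate (Suc i * l) True"
    using ih(1) by (simp add: take_add replicate_add)
  moreover have "drop (Suc i * l) xs = drop (i * l) (drop l xs)" by (simp add: add.commute)
  ultimately show ?case using ih(2) by simp
qed

lemma E_cong: "(\<And>x. x \<in> set_pmf M \<Longrightarrow> f x = g x) \<Longrightarrow> E M f = E M g"
  by (rule integral_cong_AE) (auto simp: AE_measure_pmf_iff)

lemma int_bdd: "(\<And>x. \<bar>f x\<bar> \<le> B) \<Longrightarrow> integrable (measure_pmf M) (f :: _ \<Rightarrow> real)"
  by (rule measure_pmf.integrable_const_bound[where B=B]) auto

lemma E_bind_bdd:
  assumes "\<And>x. \<bar>g x\<bar> \<le> B"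
  shows "E (bind_pmf M f) g = E M (\<lambda>x. E (f x) g)"
  unfolding measure_pmf_bind
  using measurable_measure_pmf[of f] assms
  by (intro integral_bind[where K="count_space UNIV" and B=B and B'=1])
     (auto simp: prob_space_imp_subprob_space measure_pmf.prob_space_axioms prob_space.finite_measure
           intro: prob_space.finite_measure[OF measure_pmf.prob_space_axioms])

lemma E_ifeq: "E M (\<lambda>a. if a = y then u else v) = pmf M y * u + (1 - pmf M y) * v"
proof -
  have "E M (\<lambda>a. if a = y then u else v) = E M (\<lambda>a. v + (u - v) * indicator {y} a)"
    by (rule E_cong) (auto simp: indicator_def)
  also have "\<dots> = v + (u - v) * pmf M y"
  proof -
    have i: "integrable M (\<lambda>a. (u - v) * indicator {y} a :: real)"
      by (rule int_bdd[where B="\<bar>u - v\<bar>"]) (auto simp: indicator_def)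
    show ?thesis by (simp add: Bochner_Integration.integral_add[OF _ i] measure_pmf_single)
  qed
  finally show ?thesis by (simp add: algebra_simps)
qed



locale ea =
  fixes p :: real and l k :: nat
  assumes p0: "0 < p" and p1: "p < 1" and l1: "1 \<le> l"
begin

abbreviation "nn \<equiv> k * l"

definition q :: "nat \<Rightarrow> real" where "q i = (1 - p) ^ (i * l)"
definition Tail :: "nat \<Rightarrow> real" where "Tail j = A p l * (\<Sum>i=j..<k. 1 / q i)"
definition blk :: "bool list \<Rightarrow> bool list" where "blk x = take l (drop (levr l x * l) x)"
definition phi :: "bool list \<Rightarrow> real" where
  "phi x = (if length x = nn \<and> levr l x < k then h p l (blk x) / q (levr l x) + Tail (Suc (levr l x)) else 0)"
definition F :: "bool list option \<Rightarrow> real" where "F ov = (case ov of None \<Rightarrow> 0 | Some x \<Rightarrow> phi x)"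
definition pre :: "nat \<Rightarrow> bool list" where "pre i = replicate (i * l) True"
definition R :: "bool list \<Rightarrow> bool list spmf" where
  "R x = map_pmf (\<lambda>z. Some (take ((levr l x + 1) * l) x @ z)) (U (length x - (levr l x + 1) * l))"
definition G :: "nat \<Rightarrow> bool list \<Rightarrow> bool list spmf" where
  "G j b = map_pmf (\<lambda>w. Some (pre j @ b @ w)) (U (nn - (j + 1) * l))"
definition lift :: "('a \<Rightarrow> 'b option pmf) \<Rightarrow> 'a option \<Rightarrow> 'b option pmf" where
  "lift f ov = (case ov of None \<Rightarrow> return_pmf None | Some x \<Rightarrow> f x)"
definition Vb :: "bool list \<Rightarrow> bool list spmf" where
  "Vb y = bind_pmf (U (nn - length y)) (\<lambda>w. kill_opt l nn (y @ w))"
definition inv :: "bool list spmf \<Rightarrow> bool" where "inv M \<longleftrightarrow> bind_pmf M (lift R) = M"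

lemma q_pos: "0 < q i" unfolding q_def using p1 by simp

lemma A_nonneg: "0 \<le> A p l"
  unfolding A_def using p0 p1 lam_pos by (intro sum_nonneg divide_nonneg_pos) auto

lemma Tail_nonneg: "0 \<le> Tail j"
  unfolding Tail_def using A_nonneg q_pos by (intro mult_nonneg_nonneg sum_nonneg) (auto intro: less_imp_le)

lemma Tail_k: "Tail k = 0" unfolding Tail_def by simp

lemma Tail_step: "j < k \<Longrightarrow> Tail j = A p l / q j + Tail (Suc j)"
  unfolding Tail_def by (simp add: sum.atLeast_Suc_lessThan distrib_left)

lemma nn_div: "nn div l = k" using l1 by simp

lemma kill_eq: "length x = nn \<Longrightarrow> kill_opt l nn x = (if levr l x = k then return_pmf None else return_pmf (Some x))"
  unfolding kill_opt_def using l1 by (simp add: blo_levr nn_div)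

lemma levr_pre: "levr l (pre j @ ys) = j + levr l ys"
  unfolding pre_def using levr_rep[OF l1] by simp

lemma length_pre[simp]: "length (pre j) = j * l" unfolding pre_def by simp

lemma levr_pre_block:
  assumes "length b = l" "\<not> (\<forall>x\<in>set b. x)"
  shows "levr l (pre j @ b @ w) = j"
  using assms l1 by (simp add: levr_pre levr_cons_block)

lemma blk_pre_block:
  assumes "length b = l" "\<not> (\<forall>x\<in>set b. x)"
  shows "blk (pre j @ b @ w) = b"
  using assms unfolding blk_def by (simp add: levr_pre_block)

lemma R_pre_block:
  assumes "length b = l" "\<not> (\<forall>x\<in>set b. x)"
  shows "R (pre j @ b @ w) = map_pmf (\<lambda>z. Some (pre j @ b @ z)) (U (length w))"
proof -
  have "take ((j + 1) * l) (pre j @ b @ w) = pre j @ b" using assms by simp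
  moreover have "length (pre j @ b @ w) - (j + 1) * l = length w" using assms by simp
  ultimately show ?thesis unfolding R_def using assms by (simp add: levr_pre_block)
qed

lemma inv_bind: "(\<And>x. x \<in> set_pmf M \<Longrightarrow> inv (f x)) \<Longrightarrow> inv (bind_pmf M f)"
  unfolding inv_def by (simp add: bind_assoc_pmf cong: bind_pmf_cong)

lemma inv_None: "inv (return_pmf None)"
  unfolding inv_def by (simp add: bind_return_pmf lift_def)

lemma inv_G:
  assumes "length b = l" "\<not> (\<forall>x\<in>set b. x)" "j < k"
  shows "inv (G j b)"
proof -
  have "bind_pmf (G j b) (lift R) = bind_pmf (U (nn - (j + 1) * l)) (\<lambda>w. lift R (Some (pre j @ b @ w)))"
    by (simp add: G_def bind_map_pmf)
  also have "\<dots> = bind_pmf (U (nn - (j + 1) * l)) (\<lambda>w. G j b)"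
    by (rule bind_pmf_cong) (auto simp: set_U lift_def R_pre_block assms G_def)
  finally show ?thesis unfolding inv_def by (simp add: bind_pmf_const)
qed

definition Bphi :: real where "Bphi = Max ((\<lambda>x. \<bar>phi x\<bar>) ` {x. length x = nn})"

lemma phi_bdd: "\<bar>phi x\<bar> \<le> Bphi"
proof (cases "length x = nn")
  case True
  then show ?thesis unfolding Bphi_def by (intro Max_ge) (auto simp: fin_len)
next
  case False
  have "\<bar>phi (replicate nn True)\<bar> \<le> Bphi" unfolding Bphi_def by (intro Max_ge) (auto simp: fin_len)
  then show ?thesis using False unfolding phi_def by auto
qed

lemma F_bdd: "\<bar>F ov\<bar> \<le> Bphi"
  using phi_bdd unfolding F_def by (cases ov) (auto intro: order_trans[OF abs_ge_zero phi_bdd])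

lemma length_blk: "length x = nn \<Longrightarrow> levr l x < k \<Longrightarrow> length (blk x) = l"
proof -
  assume a: "length x = nn" "levr l x < k"
  then have "Suc (levr l x) * l \<le> nn" using mult_le_mono1[of "Suc (levr l x)" k l] by simp
  then show ?thesis using a unfolding blk_def by simp
qed

lemma phi_nonneg: "0 \<le> phi x"
proof (cases "length x = nn \<and> levr l x < k")
  case True
  then have "0 \<le> h p l (blk x)" using h_nonneg[OF p0 p1 length_blk] by auto
  then show ?thesis unfolding phi_def using True q_pos Tail_nonneg
    by (auto intro!: add_nonneg_nonneg divide_nonneg_pos)
next
  case False then show ?thesis unfolding phi_def by auto
qed

lemma F_nonneg: "0 \<le> F ov" unfolding F_def using phi_nonneg by (cases ov) auto

lemma pre_Suc: "pre j @ replicate l True = pre (Suc j)"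
  unfolding pre_def by (simp add: replicate_add[symmetric] add.commute)

lemma all_rep: "length b = l \<Longrightarrow> (\<forall>x\<in>set b. x) \<Longrightarrow> b = replicate l True"
  by (simp add: list_eq_iff_nth_eq all_set_conv_all_nth)

lemma Vb_block:
  assumes "j < k" "length b = l"
  shows "Vb (pre j @ b) = (if (\<forall>x\<in>set b. x) then Vb (pre (Suc j)) else G j b)"
proof (cases "\<forall>x\<in>set b. x")
  case True
  have b: "b = replicate l True" using all_rep[OF assms(2) True] .
  show ?thesis using True by (simp add: b pre_Suc)
next
  case False
  have len: "nn - length (pre j @ b) = nn - (j + 1) * l" using assms by simp
  have "Vb (pre j @ b) = bind_pmf (U (nn - (j + 1) * l)) (\<lambda>w. return_pmf (Some (pre j @ b @ w)))"
    unfolding Vb_def len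
  proof (rule bind_pmf_cong[OF refl])
    fix w assume "w \<in> set_pmf (U (nn - (j + 1) * l))"
    then have lw: "length w = nn - (j + 1) * l" by (simp add: set_U)
    have "(j + 1) * l \<le> nn" using assms(1) mult_le_mono1[of "Suc j" k l] by simp
    then have "length ((pre j @ b) @ w) = nn" using lw assms by simp
    then show "kill_opt l nn ((pre j @ b) @ w) = return_pmf (Some (pre j @ b @ w))"
      using kill_eq levr_pre_block[OF assms(2) False] assms(1) by simp
  qed
  then show ?thesis unfolding if_not_P[OF False] G_def by (simp add: map_pmf_def)
qed

lemma Vb_split:
  assumes "j < k"
  shows "Vb (pre j) = bind_pmf (U l) (\<lambda>b. Vb (pre j @ b))"
proof -
  have e: "nn - j * l = l + (nn - (j * l + l))"
  proof -
    have "(j + 1) * l \<le> nn" using assms mult_le_mono1[of "Suc j" k l] by simp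
    then show ?thesis by simp
  qed
  show ?thesis unfolding Vb_def
    apply (simp add: e U_append bind_map_pmf bind_assoc_pmf)
    apply (rule bind_pmf_cong[OF refl])
    apply (simp add: set_U)
    done
qed

lemma E_G:
  assumes "length b = l" "\<not> (\<forall>x\<in>set b. x)" "j < k"
  shows "E (G j b) F = h p l b / q j + Tail (Suc j)"
proof -
  have "E (G j b) F = E (U (nn - (j + 1) * l)) (\<lambda>w. h p l b / q j + Tail (Suc j))"
    unfolding G_def integral_map_pmf
  proof (rule E_cong)
    fix w assume "w \<in> set_pmf (U (nn - (j + 1) * l))"
    then have lw: "length w = nn - (j + 1) * l" by (simp add: set_U)
    have "(j + 1) * l \<le> nn" using assms(3) mult_le_mono1[of "Suc j" k l] by simp
    then have "length (pre j @ b @ w) = nn" using lw assms by simp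
    then show "F (Some (pre j @ b @ w)) = h p l b / q j + Tail (Suc j)"
      unfolding F_def phi_def using assms by (simp add: levr_pre_block blk_pre_block)
  qed
  then show ?thesis by simp
qed

lemma Vb_pre: "j \<le> k \<Longrightarrow> inv (Vb (pre j)) \<and> E (Vb (pre j)) F = Tail j"
proof (induction "k - j" arbitrary: j)
  case 0
  then have jk: "j = k" by simp
  have "Vb (pre k) = return_pmf None"
    unfolding Vb_def using kill_eq[of "pre k"] levr_pre[of k "[]"] l1
    by (simp add: U_def pmf_of_set_singleton bind_return_pmf levr.simps)
  then show ?case using jk by (simp add: inv_None Tail_k F_def)
next
  case (Suc d)
  then have jk: "j < k" by simp
  have ih: "inv (Vb (pre (Suc j))) \<and> E (Vb (pre (Suc j))) F = Tail (Suc j)"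
    using Suc.hyps(1)[of "Suc j"] Suc.hyps(2) jk by simp
  have sp: "Vb (pre j) = bind_pmf (U l) (\<lambda>b. if (\<forall>x\<in>set b. x) then Vb (pre (Suc j)) else G j b)"
    unfolding Vb_split[OF jk] by (rule bind_pmf_cong) (auto simp: set_U Vb_block[OF jk])
  have i: "inv (Vb (pre j))"
    unfolding sp by (rule inv_bind) (use ih inv_G jk in \<open>auto simp: set_U\<close>)
  have "E (Vb (pre j)) F = E (U l) (\<lambda>b. E (if (\<forall>x\<in>set b. x) then Vb (pre (Suc j)) else G j b) F)"
    unfolding sp by (rule E_bind_bdd[OF F_bdd])
  also have "\<dots> = E (U l) (\<lambda>b. h p l b / q j + Tail (Suc j))"
  proof (rule E_cong)
    fix b assume "b \<in> set_pmf (U l)"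
    then have lb: "length b = l" by (simp add: set_U)
    show "E (if (\<forall>x\<in>set b. x) then Vb (pre (Suc j)) else G j b) F = h p l b / q j + Tail (Suc j)"
    proof (cases "\<forall>x\<in>set b. x")
      case True
      then show ?thesis using ih h_rep[of p l] by (simp add: all_rep[OF lb True])
    next
      case False
      then show ?thesis unfolding if_not_P[OF False] using E_G[OF lb False jk] by simp
    qed
  qed
  also have "\<dots> = A p l / q j + Tail (Suc j)"
  proof -
    have "E (U l) (\<lambda>b. h p l b / q j + Tail (Suc j)) = E (U l) (h p l) / q j + Tail (Suc j)"
      by simp
    then show ?thesis by (simp add: E_U_h)
  qed
  also have "\<dots> = Tail j" using Tail_step[OF jk] by simp
  finally show ?case using i by simp
qed

definition step :: "bool list \<Rightarrow> bool list spmf" where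
  "step x = bind_pmf (ea_step p l x) (kill_opt l nn)"

definition K :: "bool list \<Rightarrow> bool list spmf" where
  "K x = bind_pmf (R x) (lift step)"

lemma mutate3: "mutate p (a0 @ c @ z) = bind_pmf (mutate p a0) (\<lambda>a. bind_pmf (mutate p c) (\<lambda>b. map_pmf (\<lambda>w. a @ b @ w) (mutate p z)))"
  by (simp add: mutate_append map_bind_pmf map_pmf_comp)

lemma step_form:
  assumes "i < k" "length c = l" "\<not> (\<forall>x\<in>set c. x)" "length z = nn - (i + 1) * l"
  shows "step (pre i @ c @ z) = bind_pmf (mutate p (pre i)) (\<lambda>a. if a = pre i then
            bind_pmf (mutate p c) (\<lambda>b. bind_pmf (mutate p z) (\<lambda>w. kill_opt l nn (pre i @ b @ w)))
          else return_pmf (Some (pre i @ c @ z)))"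
proof -
  let ?y = "pre i @ c @ z"
  have ly: "length ?y = nn" using assms mult_le_mono1[of "Suc i" k l] by simp
  have lvy: "levr l ?y = i" using levr_pre_block[OF assms(2,3)] .
  have ky: "kill_opt l nn ?y = return_pmf (Some ?y)" using kill_eq[OF ly] lvy assms(1) by simp
  have "step ?y = bind_pmf (mutate p (pre i)) (\<lambda>a. bind_pmf (mutate p c) (\<lambda>b. bind_pmf (mutate p z) (\<lambda>w.
      kill_opt l nn (if blo l (a @ b @ w) \<ge> blo l ?y then a @ b @ w else ?y))))"
    unfolding step_def ea_step_def mutate3 by (simp add: bind_map_pmf bind_assoc_pmf map_bind_pmf)
  also have "\<dots> = bind_pmf (mutate p (pre i)) (\<lambda>a. if a = pre i then
            bind_pmf (mutate p c) (\<lambda>b. bind_pmf (mutate p z) (\<lambda>w. kill_opt l nn (pre i @ b @ w)))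
          else return_pmf (Some ?y))"
  proof (rule bind_pmf_cong[OF refl])
    fix a assume "a \<in> set_pmf (mutate p (pre i))"
    then have la: "length a = i * l" using set_mutate by fastforce
    show "bind_pmf (mutate p c) (\<lambda>b. bind_pmf (mutate p z) (\<lambda>w.
      kill_opt l nn (if blo l (a @ b @ w) \<ge> blo l ?y then a @ b @ w else ?y))) =
      (if a = pre i then bind_pmf (mutate p c) (\<lambda>b. bind_pmf (mutate p z) (\<lambda>w. kill_opt l nn (pre i @ b @ w)))
          else return_pmf (Some ?y))"
    proof (cases "a = pre i")
      case True
      have "blo l (a @ b @ w) \<ge> blo l ?y" for b w
        using True l1 lvy by (simp add: blo_levr levr_pre)
      then show ?thesis using True by simp
    next
      case False
      have "\<not> blo l (a @ b @ w) \<ge> blo l ?y" for b w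
        using levr_lt[OF l1 la, of "b @ w"] False l1 lvy by (simp add: blo_levr pre_def)
      then show ?thesis using False by (simp add: ky bind_pmf_const)
    qed
  qed
  finally show ?thesis .
qed

lemma K_form:
  assumes "length x = nn" "levr l x < k"
  shows "K x = bind_pmf (mutate p (pre (levr l x))) (\<lambda>a. if a = pre (levr l x) then
            bind_pmf (mutate p (blk x)) (\<lambda>b. Vb (pre (levr l x) @ b)) else R x)"
proof -
  define i where "i = levr l x"
  define c where "c = blk x"
  define m where "m = nn - (i + 1) * l"
  have ik: "i < k" using assms i_def by simp
  have le: "(i + 1) * l \<le> nn" using ik mult_le_mono1[of "Suc i" k l] by simp
  have dec: "take (i * l) x = replicate (i * l) True \<and> \<not> (\<forall>b\<in>set (take l (drop (i * l) x)). b)"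
    using levr_decomp[OF l1 i_def[symmetric]] le assms by simp
  have lc: "length c = l" using length_blk assms c_def by simp
  have nc: "\<not> (\<forall>x\<in>set c. x)" using dec c_def blk_def i_def by simp
  have xe: "x = pre i @ c @ drop ((i + 1) * l) x"
  proof -
    have "x = take (i * l) x @ take l (drop (i * l) x) @ drop l (drop (i * l) x)"
      by (simp only: append_take_drop_id)
    also have "\<dots> = pre i @ c @ drop ((i + 1) * l) x"
      using dec by (simp add: pre_def c_def blk_def i_def[symmetric] add.commute)
    finally show ?thesis .
  qed
  have Rx: "R x = map_pmf (\<lambda>z. Some (pre i @ c @ z)) (U m)"
    using R_pre_block[OF lc nc, of i "drop ((i + 1) * l) x"] xe assms(1) m_def by simp
  have "K x = bind_pmf (U m) (\<lambda>z. step (pre i @ c @ z))"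
    unfolding K_def Rx by (simp add: bind_map_pmf lift_def)
  also have "\<dots> = bind_pmf (U m) (\<lambda>z. bind_pmf (mutate p (pre i)) (\<lambda>a. if a = pre i then
            bind_pmf (mutate p c) (\<lambda>b. bind_pmf (mutate p z) (\<lambda>w. kill_opt l nn (pre i @ b @ w)))
          else return_pmf (Some (pre i @ c @ z))))"
    by (rule bind_pmf_cong[OF refl]) (simp add: set_U step_form[OF ik lc nc] m_def)
  also have "\<dots> = bind_pmf (mutate p (pre i)) (\<lambda>a. bind_pmf (U m) (\<lambda>z. if a = pre i then
            bind_pmf (mutate p c) (\<lambda>b. bind_pmf (mutate p z) (\<lambda>w. kill_opt l nn (pre i @ b @ w)))
          else return_pmf (Some (pre i @ c @ z))))"
    by (rule bind_commute_pmf)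
  also have "\<dots> = bind_pmf (mutate p (pre i)) (\<lambda>a. if a = pre i then
            bind_pmf (mutate p c) (\<lambda>b. Vb (pre i @ b)) else R x)"
  proof (rule bind_pmf_cong[OF refl])
    fix a
    have v: "Vb (pre i @ b) = bind_pmf (U m) (\<lambda>w. kill_opt l nn (pre i @ b @ w))" if "length b = l" for b
      unfolding Vb_def m_def using that by (simp add: add.commute)
    have X: "bind_pmf (U m) (\<lambda>z. bind_pmf (mutate p c) (\<lambda>b. bind_pmf (mutate p z) (\<lambda>w. kill_opt l nn (pre i @ b @ w))))
        = bind_pmf (mutate p c) (\<lambda>b. Vb (pre i @ b))"
    proof -
      have "bind_pmf (U m) (\<lambda>z. bind_pmf (mutate p c) (\<lambda>b. bind_pmf (mutate p z) (\<lambda>w. kill_opt l nn (pre i @ b @ w))))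
          = bind_pmf (mutate p c) (\<lambda>b. bind_pmf (bind_pmf (U m) (mutate p)) (\<lambda>w. kill_opt l nn (pre i @ b @ w)))"
        by (subst bind_commute_pmf) (simp add: bind_assoc_pmf)
      also have "\<dots> = bind_pmf (mutate p c) (\<lambda>b. Vb (pre i @ b))"
        unfolding U_mutate
        by (rule bind_pmf_cong[OF refl]) (use set_mutate lc v in fastforce)
      finally show ?thesis .
    qed
    have Y: "bind_pmf (U m) (\<lambda>z. return_pmf (Some (pre i @ c @ z))) = R x"
      unfolding Rx by (simp add: map_pmf_def)
    show "bind_pmf (U m) (\<lambda>z. if a = pre i then
            bind_pmf (mutate p c) (\<lambda>b. bind_pmf (mutate p z) (\<lambda>w. kill_opt l nn (pre i @ b @ w)))
          else return_pmf (Some (pre i @ c @ z))) =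
       (if a = pre i then bind_pmf (mutate p c) (\<lambda>b. Vb (pre i @ b)) else R x)"
      using X Y by (cases "a = pre i") simp_all
  qed
  finally show ?thesis unfolding i_def c_def .
qed

lemma x_decomp:
  assumes "length x = nn" "levr l x < k"
  shows "x = pre (levr l x) @ blk x @ drop ((levr l x + 1) * l) x \<and> length (blk x) = l
         \<and> \<not> (\<forall>b\<in>set (blk x). b)"
proof -
  define i where "i = levr l x"
  have ik: "i < k" using assms i_def by simp
  have le: "(i + 1) * l \<le> nn" using ik mult_le_mono1[of "Suc i" k l] by simp
  have dec: "take (i * l) x = replicate (i * l) True \<and> \<not> (\<forall>b\<in>set (take l (drop (i * l) x)). b)"
    using levr_decomp[OF l1 i_def[symmetric]] le assms by simp
  have "x = take (i * l) x @ take l (drop (i * l) x) @ drop l (drop (i * l) x)"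
    by (simp only: append_take_drop_id)
  also have "\<dots> = pre i @ blk x @ drop ((i + 1) * l) x"
    using dec by (simp add: pre_def blk_def i_def[symmetric] add.commute)
  finally show ?thesis using dec length_blk[OF assms] unfolding i_def blk_def by simp
qed

lemma R_G:
  assumes "length x = nn" "levr l x < k"
  shows "R x = G (levr l x) (blk x)"
proof -
  note d = x_decomp[OF assms]
  have "R x = map_pmf (\<lambda>z. Some (pre (levr l x) @ blk x @ z)) (U (length (drop ((levr l x + 1) * l) x)))"
    using R_pre_block[of "blk x" "levr l x" "drop ((levr l x + 1) * l) x"] d by metis
  then show ?thesis unfolding G_def using assms by simp
qed

lemma phi_G: "length x = nn \<Longrightarrow> levr l x < k \<Longrightarrow> phi x = h p l (blk x) / q (levr l x) + Tail (Suc (levr l x))"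
  unfolding phi_def by simp

lemma K_inv:
  assumes "length x = nn" "levr l x < k"
  shows "inv (K x)"
proof -
  note d = x_decomp[OF assms]
  show ?thesis unfolding K_form[OF assms]
  proof (rule inv_bind)
    fix a
    have "inv (bind_pmf (mutate p (blk x)) (\<lambda>b. Vb (pre (levr l x) @ b)))"
    proof (rule inv_bind)
      fix b assume "b \<in> set_pmf (mutate p (blk x))"
      then have lb: "length b = l" using set_mutate d by fastforce
      show "inv (Vb (pre (levr l x) @ b))"
        unfolding Vb_block[OF assms(2) lb]
        using Vb_pre[of "Suc (levr l x)"] inv_G[OF lb _ assms(2)] assms(2) by auto
    qed
    moreover have "inv (R x)" unfolding R_G[OF assms] using inv_G d assms by simp
    ultimately show "inv (if a = pre (levr l x) then bind_pmf (mutate p (blk x)) (\<lambda>b. Vb (pre (levr l x) @ b)) else R x)"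
      by simp
  qed
qed

lemma K_E:
  assumes "length x = nn" "levr l x < k"
  shows "E (K x) F = phi x - 1"
proof -
  note d = x_decomp[OF assms]
  define i where "i = levr l x"
  define c where "c = blk x"
  have ik: "i < k" using assms i_def by simp
  have lc: "length c = l" and nc: "\<not> (\<forall>b\<in>set c. b)" using d c_def by auto
  have X: "E (bind_pmf (mutate p c) (\<lambda>b. Vb (pre i @ b))) F = (h p l c - 1) / q i + Tail (Suc i)"
  proof -
    have "E (bind_pmf (mutate p c) (\<lambda>b. Vb (pre i @ b))) F = E (mutate p c) (\<lambda>b. E (Vb (pre i @ b)) F)"
      by (rule E_bind_bdd[OF F_bdd])
    also have "\<dots> = E (mutate p c) (\<lambda>b. h p l b / q i + Tail (Suc i))"
    proof (rule E_cong)
      fix b assume "b \<in> set_pmf (mutate p c)"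
      then have lb: "length b = l" using set_mutate lc by fastforce
      show "E (Vb (pre i @ b)) F = h p l b / q i + Tail (Suc i)"
      proof (cases "\<forall>x\<in>set b. x")
        case True
        then show ?thesis unfolding Vb_block[OF ik lb] using Vb_pre[of "Suc i"] ik h_rep[of p l]
          by (simp add: all_rep[OF lb True])
      next
        case False
        then show ?thesis unfolding Vb_block[OF ik lb] if_not_P[OF False] using E_G[OF lb False ik] by simp
      qed
    qed
    also have "\<dots> = E (mutate p c) (h p l) / q i + Tail (Suc i)" by simp
    also have "\<dots> = (h p l c - 1) / q i + Tail (Suc i)"
      using E_mutate_h[OF p0 p1 lc nc] by simp
    finally show ?thesis .
  qed
  have Y: "E (R x) F = phi x"
    unfolding R_G[OF assms] using E_G d assms phi_G[OF assms] by simp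
  have "E (K x) F = E (mutate p (pre i)) (\<lambda>a. if a = pre i then E (bind_pmf (mutate p c) (\<lambda>b. Vb (pre i @ b))) F else E (R x) F)"
    unfolding K_form[OF assms] i_def[symmetric] c_def[symmetric]
    by (subst E_bind_bdd[OF F_bdd], rule E_cong, simp)
  also have "\<dots> = q i * ((h p l c - 1) / q i + Tail (Suc i)) + (1 - q i) * phi x"
    unfolding E_ifeq X Y using p0 p1 by (simp add: pmf_mutate_self q_def)
  also have "\<dots> = phi x - 1"
    using q_pos[of i] phi_G[OF assms] unfolding i_def[symmetric] c_def[symmetric] by (simp add: field_simps)
  finally show ?thesis .
qed

definition S :: "bool list option \<Rightarrow> bool" where
  "S ov = (case ov of None \<Rightarrow> True | Some x \<Rightarrow> length x = nn \<and> levr l x < k)"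

lemma kill_S: "length y = nn \<Longrightarrow> ov \<in> set_pmf (kill_opt l nn y) \<Longrightarrow> S ov"
  using levr_le[OF l1, of y] l1 unfolding S_def by (auto simp: kill_eq split: if_splits)

lemma step_S:
  assumes "length x = nn" "ov \<in> set_pmf (step x)"
  shows "S ov"
proof -
  from assms(2) obtain y where y: "y \<in> set_pmf (ea_step p l x)" "ov \<in> set_pmf (kill_opt l nn y)"
    unfolding step_def by auto
  have "set_pmf (mutate p x) \<subseteq> {ys. length ys = nn}" using set_mutate[of p x] assms(1) by simp
  then have "length y = nn" using y(1) assms(1) unfolding ea_step_def by (auto split: if_splits)
  then show ?thesis using kill_S y(2) by simp
qed

abbreviation alive :: "nat \<Rightarrow> bool list spmf" where "alive t \<equiv> ea_alive p l nn t"

lemma alive0: "alive 0 = Vb (pre 0)"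
  unfolding Vb_def by (simp add: ea_init_def U_def pre_def)

lemma lift_eq: "lift f = (\<lambda>ov. case ov of None \<Rightarrow> return_pmf None | Some x \<Rightarrow> f x)"
  by (rule ext) (simp add: lift_def)

lemma step_eq: "step = (\<lambda>x. bind_pmf (ea_step p l x) (kill_opt l nn))"
  by (rule ext) (simp add: step_def)

lemma alive_Suc: "alive (Suc t) = bind_pmf (alive t) (lift step)"
  by (simp add: bind_spmf_def lift_eq step_eq)

lemma alive_props: "inv (alive t) \<and> (\<forall>ov\<in>set_pmf (alive t). S ov)"
proof (induction t)
  case 0
  have "inv (alive 0)" unfolding alive0 using Vb_pre[of 0] by simp
  moreover have "\<forall>ov\<in>set_pmf (alive 0). S ov"
    by (auto simp: ea_init_def set_pmf_of_set[OF ne_len fin_len] intro: kill_S)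
  ultimately show ?case by simp
next
  case (Suc t)
  have eq: "alive (Suc t) = bind_pmf (alive t) (lift K)"
  proof -
    have "alive (Suc t) = bind_pmf (bind_pmf (alive t) (lift R)) (lift step)"
      unfolding alive_Suc using Suc.IH unfolding inv_def by simp
    also have "\<dots> = bind_pmf (alive t) (lift K)"
      unfolding bind_assoc_pmf
      by (rule bind_pmf_cong[OF refl]) (auto simp: lift_def K_def bind_return_pmf split: option.splits)
    finally show ?thesis .
  qed
  have "inv (alive (Suc t))"
    unfolding eq
  proof (rule inv_bind)
    fix ov assume "ov \<in> set_pmf (alive t)"
    then have "S ov" using Suc.IH by blast
    then show "inv (lift K ov)" by (cases ov) (auto simp: S_def lift_def inv_None K_inv)
  qed
  moreover have "\<forall>ov\<in>set_pmf (alive (Suc t)). S ov"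
  proof
    fix ov assume "ov \<in> set_pmf (alive (Suc t))"
    then obtain o0 where o0: "o0 \<in> set_pmf (alive t)" "ov \<in> set_pmf (lift step o0)"
      unfolding alive_Suc by auto
    have "S o0" using o0(1) Suc.IH by blast
    then show "S ov"
    proof (cases o0)
      case None then show ?thesis using o0(2) by (simp add: lift_def S_def)
    next
      case (Some a)
      then have "length a = nn" using \<open>S o0\<close> by (simp add: S_def)
      then show ?thesis using o0(2) Some step_S by (simp add: lift_def)
    qed
  qed
  ultimately show ?case by simp
qed

definition Phi :: "nat \<Rightarrow> real" where "Phi t = E (alive t) F"
definition w :: "nat \<Rightarrow> real" where "w t = weight_spmf (alive t)"

lemma w_E: "w t = E (alive t) (\<lambda>ov. if ov = None then 0 else 1)"
  unfolding w_def E_ifeq by (simp add: weight_spmf_conv_pmf_None)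

lemma Phi_Suc: "Phi (Suc t) = Phi t - w t"
proof -
  have eq: "alive (Suc t) = bind_pmf (alive t) (lift K)"
  proof -
    have "alive (Suc t) = bind_pmf (bind_pmf (alive t) (lift R)) (lift step)"
      unfolding alive_Suc using alive_props[of t] unfolding inv_def by simp
    also have "\<dots> = bind_pmf (alive t) (lift K)"
      unfolding bind_assoc_pmf
      by (rule bind_pmf_cong[OF refl]) (auto simp: lift_def K_def bind_return_pmf split: option.splits)
    finally show ?thesis .
  qed
  have "Phi (Suc t) = E (alive t) (\<lambda>ov. E (lift K ov) F)"
    unfolding Phi_def eq by (rule E_bind_bdd[OF F_bdd])
  also have "\<dots> = E (alive t) (\<lambda>ov. F ov - (if ov = None then 0 else 1))"
  proof (rule E_cong)
    fix ov assume "ov \<in> set_pmf (alive t)"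
    then have "S ov" using alive_props by blast
    then show "E (lift K ov) F = F ov - (if ov = None then 0 else 1)"
      by (cases ov) (auto simp: S_def lift_def K_E F_def)
  qed
  also have "\<dots> = Phi t - w t"
    unfolding Phi_def w_E
    by (rule Bochner_Integration.integral_diff) (auto intro: int_bdd F_bdd[THEN order_trans] simp: int_bdd[where B=1])
  finally show ?thesis .
qed

lemma Phi0: "Phi 0 = Tail 0"
  unfolding Phi_def alive0 using Vb_pre[of 0] by simp

lemma partial: "(\<Sum>s<t. w s) = Phi 0 - Phi t"
  by (induction t) (simp_all add: Phi_Suc)

lemma Phi_nonneg: "0 \<le> Phi t"
  unfolding Phi_def by (rule Bochner_Integration.integral_nonneg) (simp add: F_nonneg)

lemma w_nonneg: "0 \<le> w t" unfolding w_def by (rule weight_spmf_nonneg)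

lemma Phi_le: "Phi t \<le> Bphi * w t"
proof -
  have "Phi t \<le> E (alive t) (\<lambda>ov. Bphi * (if ov = None then 0 else 1))"
    unfolding Phi_def
  proof (rule integral_mono)
    show "integrable (measure_pmf (alive t)) F" by (rule int_bdd[OF F_bdd])
    show "integrable (measure_pmf (alive t)) (\<lambda>ov. Bphi * (if ov = None then 0 else 1))"
      by (rule int_bdd[where B="\<bar>Bphi\<bar>"]) auto
    fix ov show "F ov \<le> Bphi * (if ov = None then 0 else 1)"
      using F_bdd[of ov] by (cases ov) (auto simp: F_def)
  qed
  also have "\<dots> = Bphi * w t" unfolding w_E by simp
  finally show ?thesis .
qed

lemma runtime: "expected_runtime p l nn = ennreal (Tail 0)"
proof -
  have sw: "summable w"
    by (rule summableI_nonneg_bounded[where x="Phi 0"]) (auto simp: w_nonneg partial Phi_nonneg)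
  then have w0: "w \<longlonglongrightarrow> 0" by (rule summable_LIMSEQ_zero)
  have "(\<lambda>t. Bphi * w t) \<longlonglongrightarrow> Bphi * 0" by (intro tendsto_mult w0 tendsto_const)
  then have lim2: "(\<lambda>t. Bphi * w t) \<longlonglongrightarrow> 0" by simp
  have e1: "eventually (\<lambda>t. 0 \<le> Phi t) sequentially" by (simp add: Phi_nonneg)
  have e2: "eventually (\<lambda>t. Phi t \<le> Bphi * w t) sequentially" by (simp add: Phi_le)
  have "Phi \<longlonglongrightarrow> 0"
    by (rule tendsto_sandwich[OF e1 e2 tendsto_const lim2])
  then have "(\<lambda>t. Phi 0 - Phi t) \<longlonglongrightarrow> Phi 0 - 0" by (intro tendsto_diff tendsto_const)
  then have "w sums Phi 0" unfolding sums_def partial by simp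
  then have "(\<Sum>t. ennreal (w t)) = ennreal (Phi 0)"
    by (intro suminf_ennreal_eq) (auto simp: w_nonneg)
  then show ?thesis unfolding expected_runtime_def w_def Phi0 .
qed

lemma runtime': "expected_runtime p l nn = ennreal (A p l * (\<Sum>i<k. 1 / (1 - p) ^ (i * l)))"
  unfolding runtime Tail_def q_def atLeast0LessThan ..

end


definition c2 :: "nat \<Rightarrow> real" where "c2 m = real m * (real m - 1) / 2"
definition c3 :: "nat \<Rightarrow> real" where "c3 m = real m * (real m - 1) * (real m - 2) / 6"

lemma c2_nonneg: "0 \<le> c2 m"
  unfolding c2_def by (cases m) auto

lemma c3_nonneg: "0 \<le> c3 m"
proof (cases m)
  case 0 then show ?thesis by (simp add: c3_def)
next
  case (Suc j) then show ?thesis by (cases j) (auto simp: c3_def)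
qed

lemma c2_Suc: "c2 (Suc m) = c2 m + real m" unfolding c2_def by (simp add: field_simps)
lemma c3_Suc: "c3 (Suc m) = c3 m + c2 m" unfolding c3_def c2_def by (simp add: field_simps)

lemma powU:
  fixes x :: real assumes "0 \<le> x" "x \<le> 1"
  shows "(1 - x) ^ m \<le> 1 - real m * x + c2 m * x^2"
proof (induction m)
  case 0 then show ?case by (simp add: c2_def)
next
  case (Suc m)
  have "(1 - x) ^ Suc m = (1 - x) * (1 - x) ^ m" by simp
  also have "\<dots> \<le> (1 - x) * (1 - real m * x + c2 m * x^2)"
    using Suc assms by (intro mult_left_mono) auto
  also have "\<dots> = 1 - real (Suc m) * x + c2 (Suc m) * x^2 - c2 m * x^3"
    by (simp add: c2_Suc algebra_simps power2_eq_square power3_eq_cube)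
  also have "\<dots> \<le> 1 - real (Suc m) * x + c2 (Suc m) * x^2"
    using c2_nonneg[of m] assms by simp
  finally show ?case .
qed

lemma powL:
  fixes x :: real assumes "0 \<le> x" "x \<le> 1"
  shows "(1 - x) ^ m \<ge> 1 - real m * x + c2 m * x^2 - c3 m * x^3"
proof (induction m)
  case 0 then show ?case by (simp add: c2_def c3_def)
next
  case (Suc m)
  have "1 - real (Suc m) * x + c2 (Suc m) * x^2 - c3 (Suc m) * x^3
        \<le> 1 - real (Suc m) * x + c2 (Suc m) * x^2 - c3 (Suc m) * x^3 + c3 m * x^4"
    using c3_nonneg[of m] assms by simp
  also have "\<dots> = (1 - x) * (1 - real m * x + c2 m * x^2 - c3 m * x^3)"
    by (simp add: c2_Suc c3_Suc algebra_simps power2_eq_square power3_eq_cube power4_eq_xxxx)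
  also have "\<dots> \<le> (1 - x) * (1 - x) ^ m"
    using Suc assms by (intro mult_left_mono) auto
  finally show ?case by simp
qed

definition NN :: "nat \<Rightarrow> real" where "NN m = 2 * c3 m + (real m - 1) * c2 m + (real m - 1) * c3 m"

lemma d_bound:
  fixes x :: real and m :: nat
  assumes m1: "1 \<le> m" and x0: "0 < x" and x1: "x \<le> 1" and xm: "(real m - 1) * x \<le> 1"
  shows "\<bar>1 / (1 - (1 - x) ^ m) - 1 / (real m * x) - (real m - 1) / (2 * real m)\<bar> \<le> NN m * x"
proof -
  define g where "g = 1 - (1 - x) ^ m"
  define th where "th = g - (real m * x - c2 m * x^2)"
  have th0: "0 \<le> th" unfolding th_def g_def using powU[of x m] x0 x1 by simp
  have th1: "th \<le> c3 m * x^3" unfolding th_def g_def using powL[of x m] x0 x1 by simp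
  have mpos: "0 < real m" using m1 by simp
  have "c2 m * x^2 \<le> real m * x / 2"
  proof -
    have "c2 m * x^2 = (real m * x / 2) * ((real m - 1) * x)"
      unfolding c2_def by (simp add: power2_eq_square algebra_simps)
    also have "\<dots> \<le> (real m * x / 2) * 1"
      using xm x0 mpos by (intro mult_left_mono) auto
    finally show ?thesis by simp
  qed
  then have gl: "g \<ge> real m * x / 2" using th0 unfolding th_def by simp
  have gpos: "0 < g" using gl mpos x0 by (smt (verit) divide_pos_pos mult_pos_pos)
  define num where "num = - 2 * th + (real m - 1) * c2 m * x^3 - (real m - 1) * x * th"
  have eq: "1 / g - 1 / (real m * x) - (real m - 1) / (2 * real m) = num / (2 * real m * x * g)"
  proof -
    have ne: "num = 2 * real m * x - 2 * g - (real m - 1) * x * g"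
      unfolding num_def th_def c2_def by (simp add: power2_eq_square power3_eq_cube field_simps)
    show ?thesis unfolding ne using gpos mpos x0 by (simp add: field_simps)
  qed
  have nb: "\<bar>num\<bar> \<le> NN m * x^3"
  proof -
    have m10: "0 \<le> real m - 1" using m1 by simp
    have "\<bar>num\<bar> \<le> 2 * th + (real m - 1) * c2 m * x^3 + (real m - 1) * x * th"
      unfolding num_def using th0 m10 c2_nonneg[of m] x0
      by (smt (verit) mult_nonneg_nonneg zero_less_power)
    also have "\<dots> \<le> 2 * (c3 m * x^3) + (real m - 1) * c2 m * x^3 + (real m - 1) * x * (c3 m * x^3)"
      using th1 m10 x0 c2_nonneg[of m] by (intro add_mono mult_left_mono) auto
    also have "\<dots> \<le> 2 * (c3 m * x^3) + (real m - 1) * c2 m * x^3 + (real m - 1) * 1 * (c3 m * x^3)"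
      using x1 m10 c3_nonneg[of m] x0 by (intro add_mono mult_left_mono mult_right_mono) auto
    also have "\<dots> = NN m * x^3" unfolding NN_def by (simp add: algebra_simps)
    finally show ?thesis .
  qed
  have den: "real m * real m * x^2 \<le> 2 * real m * x * g"
  proof -
    have "real m * real m * x^2 = 2 * real m * x * (real m * x / 2)" by (simp add: power2_eq_square)
    also have "\<dots> \<le> 2 * real m * x * g" using gl mpos x0 by (intro mult_left_mono) auto
    finally show ?thesis .
  qed
  have "\<bar>num / (2 * real m * x * g)\<bar> = \<bar>num\<bar> / (2 * real m * x * g)"
    using gpos mpos x0 by (simp add: abs_divide)
  also have "\<dots> \<le> NN m * x^3 / (real m * real m * x^2)"
  proof (rule frac_le)
    show "0 \<le> NN m * x^3" using nb by (meson abs_ge_zero order_trans)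
    show "0 < real m * real m * x^2" using mpos x0 by simp
  qed (use nb den in auto)
  also have "\<dots> = NN m * x / (real m * real m)" using x0 by (simp add: power2_eq_square power3_eq_cube)
  also have "\<dots> \<le> NN m * x"
  proof -
    have "0 \<le> NN m" unfolding NN_def using m1 c2_nonneg[of m] c3_nonneg[of m] by simp
    moreover have "1 \<le> real m * real m"
    proof -
      have "1 \<le> real m" using m1 by simp
      then show ?thesis by (metis mult_mono' mult_1 zero_le_one)
    qed
    ultimately show ?thesis using x0 divide_left_mono[of 1 "real m * real m" "NN m * x"] by simp
  qed
  finally show ?thesis using eq unfolding g_def by simp
qed



lemma geom:
  fixes y :: real assumes y0: "0 < y" and y1: "y < 1"
  shows "(\<Sum>i<Suc k. 1 / y ^ i) = (1 / y ^ k - y) / (1 - y)"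
proof (induction k)
  case 0 then show ?case using y1 by simp
next
  case (Suc k)
  have "(\<Sum>i<Suc (Suc k). 1 / y ^ i) = (1 / y ^ k - y) / (1 - y) + 1 / y ^ Suc k"
    using Suc by simp
  also have "\<dots> = (1 / y ^ Suc k - y) / (1 - y)"
    using y0 y1 by (simp add: field_simps)
  finally show ?case .
qed

lemma G_eq:
  fixes p :: real assumes p0: "0 < p" and p1: "p < 1" and l1: "1 \<le> l"
  shows "(\<Sum>i<k. 1 / (1 - p) ^ (i * l)) =
    ((1 - p) powi (- int (k * l) + int l) - (1 - p) ^ l) / (1 - (1 - p) ^ l)"
proof (cases k)
  case 0 then show ?thesis by simp
next
  case (Suc j)
  define y where "y = (1 - p) ^ l"
  have y0: "0 < y" using p1 by (simp add: y_def)
  have y1: "y < 1" using p0 p1 l1 unfolding y_def by (simp add: power_less_one_iff)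
  have sm: "(\<Sum>i<k. 1 / (1 - p) ^ (i * l)) = (1 / y ^ j - y) / (1 - y)"
  proof -
    have "(\<Sum>i<k. 1 / (1 - p) ^ (i * l)) = (\<Sum>i<Suc j. 1 / y ^ i)"
      unfolding Suc y_def by (simp add: power_mult[symmetric] mult.commute)
    also have "\<dots> = (1 / y ^ j - y) / (1 - y)" by (rule geom[OF y0 y1])
    finally show ?thesis .
  qed
  have eqn: "- int (k * l) + int l = - int (j * l)" using Suc by simp
  have "(1 - p) powi (- int (k * l) + int l) = inverse ((1 - p) powi int (j * l))"
    by (subst eqn) (rule power_int_minus)
  also have "\<dots> = inverse ((1 - p) ^ (j * l))" by (simp only: power_int_of_nat)
  also have "\<dots> = 1 / y ^ j" unfolding y_def by (simp add: power_mult[symmetric] mult.commute divide_inverse)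
  finally have pw: "(1 - p) powi (- int (k * l) + int l) = 1 / y ^ j" .
  show ?thesis unfolding sm pw y_def ..
qed

lemma two_pow_ba:
  assumes p0: "0 < p"
  shows "2 ^ l * (b_const l / p + a_const l) =
    (\<Sum>m=1..l. real (l choose m) * (1 / (real m * (2 * p)) + (real m - 1) / (2 * real m)))"
proof -
  have s: "(\<Sum>m=1..l. real (l choose m)) = 2 ^ l - 1"
  proof -
    have "(\<Sum>m\<le>l. real (l choose m)) = 2 ^ l"
      using choose_row_sum[of l] by (metis of_nat_numeral of_nat_power of_nat_sum)
    moreover have "{..l} = insert 0 {1..l}" by auto
    ultimately show ?thesis by simp
  qed
  have t: "real (l choose m) * (1 / (real m * (2 * p)) + (real m - 1) / (2 * real m)) =
     real (l choose m) / real m / (2 * p) + real (l choose m) / 2 - real (l choose m) / real m / 2"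
    if "m \<in> {1..l}" for m
    using that p0 by (auto simp: field_simps)
  have "(\<Sum>m=1..l. real (l choose m) * (1 / (real m * (2 * p)) + (real m - 1) / (2 * real m)))
     = s_const l / (2 * p) + (2 ^ l - 1) / 2 - s_const l / 2"
  proof -
    have "(\<Sum>m=1..l. real (l choose m) * (1 / (real m * (2 * p)) + (real m - 1) / (2 * real m)))
      = (\<Sum>m=1..l. real (l choose m) / real m / (2 * p) + real (l choose m) / 2 - real (l choose m) / real m / 2)"
      by (rule sum.cong[OF refl t])
    also have "\<dots> = (\<Sum>m=1..l. real (l choose m) / real m) / (2 * p) + (\<Sum>m=1..l. real (l choose m)) / 2
        - (\<Sum>m=1..l. real (l choose m) / real m) / 2"
      by (simp add: sum.distrib sum_subtractf sum_divide_distrib)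
    finally show ?thesis unfolding s s_const_def .
  qed
  also have "\<dots> = 2 ^ l * (b_const l / p + a_const l)"
    unfolding b_const_def a_const_def using p0 by (simp add: field_simps)
  finally show ?thesis by simp
qed

theorem mainTheorem15:
  fixes l :: nat
  assumes "l \<ge> 1"
  shows "\<exists>C \<delta>. \<delta> > 0 \<and> (\<forall>n p. l dvd n \<longrightarrow> 0 < p \<longrightarrow> p < \<delta> \<longrightarrow>
           (\<exists>r. \<bar>r\<bar> \<le> C * p \<and>
              expected_runtime p l n =
                ennreal (2 ^ l * (b_const l / p + a_const l + r) *
                  (((1 - p) powi (- int n + int l) - (1 - p) ^ l) / (1 - (1 - p) ^ l)))))"
proof -
  define \<delta> :: real where "\<delta> = 1 / (2 * real l)"
  define C :: real where "C = (\<Sum>m=1..l. real (l choose m) * NN m * 2) / 2 ^ l"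
  have lpos: "0 < real l" using assms by simp
  have "\<forall>n p. l dvd n \<longrightarrow> 0 < p \<longrightarrow> p < \<delta> \<longrightarrow>
           (\<exists>r. \<bar>r\<bar> \<le> C * p \<and>
              expected_runtime p l n =
                ennreal (2 ^ l * (b_const l / p + a_const l + r) *
                  (((1 - p) powi (- int n + int l) - (1 - p) ^ l) / (1 - (1 - p) ^ l))))"
  proof (intro allI impI)
    fix n :: nat and p :: real
    assume dv: "l dvd n" and p0: "0 < p" and pd: "p < \<delta>"
    define k where "k = n div l"
    have nk: "n = k * l" using dv unfolding k_def by simp
    have lp: "real l * (2 * p) < 1" using pd lpos unfolding \<delta>_def by (simp add: field_simps)
    have p1: "p < 1"
    proof -
      have "1 \<le> real l" using assms by simp
      then have "2 * p \<le> real l * (2 * p)" using p0 by simp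
      then show ?thesis using lp by simp
    qed
    interpret ea p l k using p0 p1 assms by unfold_locales auto
    define r where "r = A p l / 2 ^ l - b_const l / p - a_const l"
    have Ar: "2 ^ l * (b_const l / p + a_const l + r) = A p l"
      unfolding r_def by (simp add: field_simps)
    have diff: "A p l - 2 ^ l * (b_const l / p + a_const l) =
       (\<Sum>m=1..l. real (l choose m) * (1 / (1 - (1 - 2 * p) ^ m) - 1 / (real m * (2 * p)) - (real m - 1) / (2 * real m)))"
      unfolding two_pow_ba[OF p0] A_def sum_subtractf[symmetric]
      by (rule sum.cong[OF refl]) (simp add: right_diff_distrib distrib_left)
    have "\<bar>A p l - 2 ^ l * (b_const l / p + a_const l)\<bar> \<le>
        (\<Sum>m=1..l. real (l choose m) * (NN m * (2 * p)))"
      unfolding diff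
    proof (rule order_trans[OF sum_abs sum_mono])
      fix m assume m: "m \<in> {1..l}"
      have "\<bar>1 / (1 - (1 - 2 * p) ^ m) - 1 / (real m * (2 * p)) - (real m - 1) / (2 * real m)\<bar> \<le> NN m * (2 * p)"
      proof (rule d_bound)
        show "1 \<le> m" using m by simp
        show "0 < 2 * p" using p0 by simp
        show "2 * p \<le> 1" using p1 lp assms 
        proof -
          have "1 \<le> real l" using assms by simp
          then have "2 * p \<le> real l * (2 * p)" using p0 by simp
          then show ?thesis using lp by simp
        qed
        have "real m - 1 \<le> real l" using m by simp
        then have "(real m - 1) * (2 * p) \<le> real l * (2 * p)" using p0 by (intro mult_right_mono) auto
        then show "(real m - 1) * (2 * p) \<le> 1" using lp by simp
      qed
      then show "\<bar>real (l choose m) * (1 / (1 - (1 - 2 * p) ^ m) - 1 / (real m * (2 * p)) - (real m - 1) / (2 * real m))\<bar>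
          \<le> real (l choose m) * (NN m * (2 * p))"
        by (simp add: abs_mult mult_left_mono)
    qed
    also have "\<dots> = (\<Sum>m=1..l. real (l choose m) * NN m * 2) * p"
      unfolding sum_distrib_right by (rule sum.cong[OF refl]) simp
    also have "\<dots> = C * p * 2 ^ l" unfolding C_def by simp
    finally have bd: "\<bar>A p l - 2 ^ l * (b_const l / p + a_const l)\<bar> \<le> C * p * 2 ^ l" .
    have "\<bar>r\<bar> = \<bar>A p l - 2 ^ l * (b_const l / p + a_const l)\<bar> / 2 ^ l"
      unfolding r_def by (simp add: field_simps)
    also have "\<dots> \<le> C * p" using bd by (simp add: divide_le_eq)
    finally have rb: "\<bar>r\<bar> \<le> C * p" .
    have "expected_runtime p l n =
                ennreal (2 ^ l * (b_const l / p + a_const l + r) *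
                  (((1 - p) powi (- int n + int l) - (1 - p) ^ l) / (1 - (1 - p) ^ l)))"
      unfolding Ar nk runtime' G_eq[OF p0 p1 assms] ..
    then show "\<exists>r. \<bar>r\<bar> \<le> C * p \<and>
              expected_runtime p l n =
                ennreal (2 ^ l * (b_const l / p + a_const l + r) *
                  (((1 - p) powi (- int n + int l) - (1 - p) ^ l) / (1 - (1 - p) ^ l)))"
      using rb by blast
  qed
  moreover have "\<delta> > 0" unfolding \<delta>_def using lpos by simp
  ultimately show ?thesis by blast
qed


end
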